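(* Let $n\ge1$ and $d\ge0$. The map $\phi\colon\mathsf{PB}_{n,d}\to\mathsf{C}_{n,d}$ is a bijection.
   Context: A composition is a finite sequence of positive integers $\beta=(\beta_1,\dots,\beta_k)$, with length $\bm{l}(\beta)=k$ and size $|\beta|=\sum\beta_i$ (the empty composition is allowed). A partition is a weakly decreasing composition $\lambda=(\lambda_1\ge\lambda_2\ge\cdots)$. A composition $\alpha$ is inverting if for each integer $i$ with $1<i\le\max_j\alpha_j$ there exist indices $s<t$ with $\alpha_s=i$ and $\alpha_t=i-1$. Every composition factors uniquely as $\alpha=\gamma\,k^{i_k}\cdots2^{i_2}1^{i_1}$ (concatenation, $i_j\ge1$) with $\gamma$ a composition containing none of the values $1,\dots,k$ and $k\ge0$ maximal; $\alpha$ is pure if this $k$ is even. $\mathsf{B}_n$ is the set of pure and inverting compositions of length at most $n$. $\mathsf{C}_{n,d}$ is the set of compositions of $d$ with at most $n$ parts, and $\mathsf{PB}_{n,d}=\{(\lambda,\beta):\lambda$ a partition, $\beta\in\mathsf{B}_n$, $|\lambda|+|\beta|=d$, $\bm{l}(\lambda)\le n$, $\bm{l}(\beta)\le n\}$. For $(\lambda,\beta)\in\mathsf{PB}_{n,d}$, $\phi(\lambda,\beta)$ is defined as follows: if $\bm{l}(\lambda)>\bm{l}(\beta)$, first append $\bm{l}(\lambda)-\bm{l}(\beta)$ zeros after the last part of $\beta$. Then, for each $1\le i\le\bm{l}(\lambda)$, add $\lambda_i$ to the $i$-th largest part of (the padded) $\beta$, where parts are compared by value and, when $\beta_j=\beta_k$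 with $j<k$, the part $\beta_j$ is considered smaller than $\beta_k$. The resulting composition is $\phi(\lambda,\beta)$. *)

theory Defs
  imports Main
begin

definition is_composition :: "nat list \<Rightarrow> bool" where
  "is_composition \<alpha> \<longleftrightarrow> (\<forall>x\<in>set \<alpha>. 0 < x)"

definition is_partition :: "nat list \<Rightarrow> bool" where
  "is_partition lam \<longleftrightarrow> is_composition lam \<and> sorted_wrt (\<ge>) lam"

definition inverting :: "nat list \<Rightarrow> bool" where
  "inverting \<alpha> \<longleftrightarrow>
     (\<forall>i. 1 < i \<and> (\<exists>j<length \<alpha>. i \<le> \<alpha> ! j) \<longrightarrow>
        (\<exists>s t. s < t \<and> t < length \<alpha> \<and> \<alpha> ! s = i \<and> \<alpha> ! t = i - 1))"

definition factors_with :: "nat list \<Rightarrow> nat \<Rightarrow> bool" where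
  "factors_with \<alpha> k \<longleftrightarrow>
     (\<exists>\<gamma> (c::nat \<Rightarrow> nat). (\<forall>j\<in>{1..k}. 1 \<le> c j) \<and> (\<forall>x\<in>set \<gamma>. x \<notin> {1..k}) \<and>
        \<alpha> = \<gamma> @ concat (map (\<lambda>j. replicate (c j) j) (rev [1..<Suc k])))"

definition pure :: "nat list \<Rightarrow> bool" where
  "pure \<alpha> \<longleftrightarrow> even (GREATEST k. factors_with \<alpha> k)"

definition B_set :: "nat \<Rightarrow> nat list set" where
  "B_set n = {\<beta>. is_composition \<beta> \<and> pure \<beta> \<and> inverting \<beta> \<and> length \<beta> \<le> n}"

definition C_set :: "nat \<Rightarrow> nat \<Rightarrow> nat list set" where
  "C_set n d = {\<alpha>. is_composition \<alpha> \<and> sum_list \<alpha> = d \<and> length \<alpha> \<le> n}"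

definition PB_set :: "nat \<Rightarrow> nat \<Rightarrow> (nat list \<times> nat list) set" where
  "PB_set n d = {(lam, \<beta>). is_partition lam \<and> \<beta> \<in> B_set n \<and> sum_list lam + sum_list \<beta> = d
                       \<and> length lam \<le> n \<and> length \<beta> \<le> n}"

definition pad :: "nat list \<Rightarrow> nat list \<Rightarrow> nat list" where
  "pad lam \<beta> = \<beta> @ replicate (length lam - length \<beta>) 0"

definition rank :: "nat list \<Rightarrow> nat \<Rightarrow> nat" where
  "rank b j = card {k. k < length b \<and> (b ! j < b ! k \<or> (b ! j = b ! k \<and> j < k))}"

text \<open>phi: add lambda_i to the i-th largest part of the padded beta.\<close>
definition phi :: "nat list \<Rightarrow> nat list \<Rightarrow> nat list" where
  "phi lam \<beta> = (let b = pad lam \<beta> in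
     map (\<lambda>j. b ! j + (if rank b j < length lam then lam ! rank b j else 0)) [0..<length b])"

end

theory Submission
  imports Defs
begin


definition lt :: "nat list \<Rightarrow> nat \<Rightarrow> nat \<Rightarrow> bool" where
  "lt x j k \<longleftrightarrow> x!j < x!k \<or> (x!j = x!k \<and> j < k)"

lemma rank_alt: "rank x j = card {k. k < length x \<and> lt x j k}"
  by (simp add: rank_def lt_def)

lemma lt_trans: "lt x i j \<Longrightarrow> lt x j k \<Longrightarrow> lt x i k"
  unfolding lt_def by auto

lemma lt_irrefl: "\<not> lt x j j" unfolding lt_def by auto

lemma lt_asym: "lt x j k \<Longrightarrow> \<not> lt x k j" unfolding lt_def by auto

lemma lt_total: "j \<noteq> k \<Longrightarrow> lt x j k \<or> lt x k j" unfolding lt_def by auto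

lemma rank_less:
  assumes "j < length x" "k < length x" "lt x k j"
  shows "rank x j < rank x k"
proof -
  have "{i. i < length x \<and> lt x j i} \<subset> {i. i < length x \<and> lt x k i}"
    using assms lt_trans lt_irrefl by blast
  then show ?thesis unfolding rank_alt by (intro psubset_card_mono) auto
qed

lemma rank_less_iff:
  assumes "j < length x" "k < length x"
  shows "rank x j < rank x k \<longleftrightarrow> lt x k j"
  using assms rank_less lt_total by (metis less_asym less_irrefl)

lemma rank_bound:
  assumes "j < length x" shows "rank x j < length x"
proof -
  have "{i. i < length x \<and> lt x j i} \<subseteq> {..<length x} - {j}" using lt_irrefl by auto
  then have "rank x j \<le> card ({..<length x} - {j})" unfolding rank_alt
    by (intro card_mono) auto
  then show ?thesis using assms by simp
qed

lemma rank_inj: "inj_on (rank x) {..<length x}"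
  by (intro inj_onI) (metis lessThan_iff less_irrefl lt_total rank_less)

lemma rank_bij: "bij_betw (rank x) {..<length x} {..<length x}"
proof -
  have sub: "rank x ` {..<length x} \<subseteq> {..<length x}" using rank_bound by auto
  have "card (rank x ` {..<length x}) = length x" using card_image[OF rank_inj] by simp
  then have "rank x ` {..<length x} = {..<length x}"
    using sub by (intro card_subset_eq) auto
  then show ?thesis using rank_inj by (simp add: bij_betw_def)
qed

definition pos :: "nat list \<Rightarrow> nat \<Rightarrow> nat" where
  "pos x r = inv_into {..<length x} (rank x) r"

lemma pos_props:
  assumes "r < length x"
  shows "pos x r < length x" "rank x (pos x r) = r"
proof -
  have b: "bij_betw (inv_into {..<length x} (rank x)) {..<length x} {..<length x}"
    using rank_bij bij_betw_inv_into by blast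
  show "pos x r < length x" using bij_betwE[OF b] assms unfolding pos_def by auto
  show "rank x (pos x r) = r" using rank_bij assms unfolding pos_def
    by (simp add: bij_betw_def f_inv_into_f)
qed

lemma pos_rank: "j < length x \<Longrightarrow> pos x (rank x j) = j"
  unfolding pos_def using rank_inj by (simp add: inv_into_f_f)

lemma rank_induct:
  assumes "0 < length x"
    and base: "P (pos x (length x - 1))"
    and step: "\<And>j k. j < length x \<Longrightarrow> k < length x \<Longrightarrow> Suc (rank x k) = rank x j \<Longrightarrow> P j \<Longrightarrow> P k"
    and "k < length x"
  shows "P k"
proof -
  let ?L = "length x"
  have "\<forall>k. k < ?L \<longrightarrow> ?L - 1 - rank x k \<le> t \<longrightarrow> P k" for t
  proof (induction t)
    case 0
    show ?case
    proof (intro allI impI)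
      fix k assume "k < ?L" "?L - 1 - rank x k \<le> 0"
      then have "rank x k = ?L - 1" using rank_bound[of k x] by auto
      then have "k = pos x (?L - 1)" using pos_rank \<open>k < ?L\<close> by metis
      then show "P k" using base by simp
    qed
  next
    case (Suc t)
    show ?case
    proof (intro allI impI)
      fix k assume k: "k < ?L" "?L - 1 - rank x k \<le> Suc t"
      show "P k"
      proof (cases "?L - 1 - rank x k \<le> t")
        case True then show ?thesis using Suc k by blast
      next
        case False
        then have r: "Suc (rank x k) < ?L" by auto
        define j where "j = pos x (Suc (rank x k))"
        have j: "j < ?L" "rank x j = Suc (rank x k)" using pos_props[OF r] j_def by auto
        then have "P j" using Suc k False by auto
        then show ?thesis using step[OF j(1) k(1)] j by simp
      qed
    qed
  qed
  then show ?thesis using assms(4) by blast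
qed

lemma adj_between:
  assumes "j < length x" "k < length x" "Suc (rank x k) = rank x j" "i < length x"
  shows "\<not> (lt x j i \<and> lt x i k)"
  using assms rank_less by (metis Suc_le_eq leD less_imp_le_nat)

definition S :: "nat list \<Rightarrow> nat list \<Rightarrow> bool" where
  "S x b \<longleftrightarrow> length b = length x \<and> (\<forall>j k. j < length x \<longrightarrow> k < length x \<longrightarrow>
      Suc (rank x k) = rank x j \<longrightarrow> b!k = b!j + (if k < j then 1 else 0))"

lemma S_lt:
  assumes "S x b" "j < length x" "k < length x" "lt x j k"
  shows "lt b j k"
proof -
  have adj: "lt b j k" if "j < length x" "k < length x" "Suc (rank x k) = rank x j" for j k
  proof -
    have "j \<noteq> k" using that by auto
    then show ?thesis using assms(1) that unfolding S_def lt_def by (auto split: if_splits)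
  qed
  have "\<forall>j k. j < length x \<longrightarrow> k < length x \<longrightarrow> rank x k + Suc t = rank x j \<longrightarrow> lt b j k" for t
  proof (induction t)
    case 0 then show ?case using adj by simp
  next
    case (Suc t)
    show ?case
    proof (intro allI impI)
      fix j k assume jk: "j < length x" "k < length x" "rank x k + Suc (Suc t) = rank x j"
      have r: "Suc (rank x k) < length x" using rank_bound[OF jk(1)] jk(3) by simp
      define k' where "k' = pos x (Suc (rank x k))"
      have k': "k' < length x" "rank x k' = Suc (rank x k)" using pos_props[OF r] k'_def by auto
      have "lt b j k'" using Suc jk k' by auto
      moreover have "lt b k' k" using adj k' jk by simp
      ultimately show "lt b j k" using lt_trans by blast
    qed
  qed
  moreover have "rank x k < rank x j" using rank_less assms by blast
  then obtain t where "rank x j = Suc (rank x k + t)" using less_iff_Suc_add by blast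
  ultimately show ?thesis using assms by (metis add_Suc_right)
qed

lemma lt_mono_rank:
  assumes "length a = length b"
    and mono: "\<And>j k. j < length b \<Longrightarrow> k < length b \<Longrightarrow> lt b j k \<Longrightarrow> lt a j k"
  shows "\<And>j k. j < length b \<Longrightarrow> k < length b \<Longrightarrow> lt a j k \<longleftrightarrow> lt b j k"
    and "\<And>j. j < length b \<Longrightarrow> rank a j = rank b j"
proof -
  show iff: "lt a j k \<longleftrightarrow> lt b j k" if "j < length b" "k < length b" for j k
  proof (cases "j = k")
    case True then show ?thesis using lt_irrefl by simp
  next
    case False
    then show ?thesis using that mono lt_total lt_asym by blast
  qed
  show "rank a j = rank b j" if "j < length b" for j
    unfolding rank_alt using iff assms(1) that by (intro arg_cong[where f=card]) auto
qed



definition gl :: "nat list \<Rightarrow> nat \<Rightarrow> nat" where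
  "gl lam r = (if r < length lam then lam!r else 0)"

lemma length_pad: "length (pad lam \<beta>) = max (length lam) (length \<beta>)"
  by (simp add: pad_def)

lemma pad_nth: "j < length (pad lam \<beta>) \<Longrightarrow> pad lam \<beta> ! j = (if j < length \<beta> then \<beta>!j else 0)"
  by (auto simp: pad_def nth_append)

lemma length_phi: "length (phi lam \<beta>) = length (pad lam \<beta>)"
  by (simp add: phi_def Let_def)

lemma phi_nth: "j < length (pad lam \<beta>) \<Longrightarrow>
   phi lam \<beta> ! j = pad lam \<beta> ! j + gl lam (rank (pad lam \<beta>) j)"
  by (simp add: phi_def Let_def gl_def)

lemma gl_anti: "sorted_wrt (\<ge>) lam \<Longrightarrow> r \<le> s \<Longrightarrow> gl lam s \<le> gl lam r"
  unfolding gl_def sorted_wrt_iff_nth_less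
  by (cases "r = s") auto

lemma add_lt:
  assumes "length a = length b" "\<And>j. j < length b \<Longrightarrow> a!j = b!j + g (rank b j)"
    "\<And>r s. r \<le> s \<Longrightarrow> g s \<le> g r" "j < length b" "k < length b" "lt b j k"
  shows "lt a j k"
proof -
  have "rank b k < rank b j" using rank_less assms(4,5,6) by blast
  then have "g (rank b j) \<le> g (rank b k)" using assms(3) by simp
  then show ?thesis using assms(2)[OF assms(4)] assms(2)[OF assms(5)] assms(6)
    unfolding lt_def by auto
qed

lemma phi_rank:
  assumes "sorted_wrt (\<ge>) lam" "j < length (pad lam \<beta>)"
  shows "rank (phi lam \<beta>) j = rank (pad lam \<beta>) j"
proof -
  have "\<And>j k. j < length (pad lam \<beta>) \<Longrightarrow> k < length (pad lam \<beta>) \<Longrightarrow>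
     lt (pad lam \<beta>) j k \<Longrightarrow> lt (phi lam \<beta>) j k"
    by (rule add_lt[where g="gl lam"]) (auto simp: length_phi phi_nth gl_anti[OF assms(1)])
  from lt_mono_rank(2)[OF length_phi this] assms(2) show ?thesis by blast
qed

lemma phi_sum: "sum_list (phi lam \<beta>) = sum_list \<beta> + sum_list lam"
proof -
  let ?b = "pad lam \<beta>" let ?L = "length ?b"
  have "sum_list (phi lam \<beta>) = (\<Sum>j<?L. phi lam \<beta> ! j)"
    by (simp add: sum_list_sum_nth length_phi atLeast0LessThan)
  also have "\<dots> = (\<Sum>j<?L. ?b ! j) + (\<Sum>j<?L. gl lam (rank ?b j))"
    by (simp add: phi_nth sum.distrib)
  also have "(\<Sum>j<?L. gl lam (rank ?b j)) = (\<Sum>r<?L. gl lam r)"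
    using sum.reindex_bij_betw[OF rank_bij[of ?b]] by blast
  also have "\<dots> = (\<Sum>r<length lam. gl lam r)"
  proof (rule sum.mono_neutral_right)
    show "\<forall>i\<in>{..<?L} - {..<length lam}. gl lam i = 0" by (auto simp: gl_def)
  qed (auto simp: length_pad)
  also have "\<dots> = sum_list lam" by (simp add: gl_def sum_list_sum_nth atLeast0LessThan)
  also have "(\<Sum>j<?L. ?b ! j) = sum_list ?b"
    by (simp add: sum_list_sum_nth atLeast0LessThan)
  also have "sum_list ?b = sum_list \<beta>" by (simp add: pad_def)
  finally show ?thesis by simp
qed



lemma inverting_D:
  assumes "inverting \<beta>" "1 < i" "j < length \<beta>" "i \<le> \<beta>!j"
  obtains s t where "s < t" "t < length \<beta>" "\<beta>!s = i" "\<beta>!t = i - 1"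
  using assms unfolding inverting_def by blast

lemma pad_S:
  assumes comp: "is_composition \<beta>" and inv: "inverting \<beta>" and b: "b = pad lam \<beta>"
  shows "S b b"
proof -
  let ?L = "length b" let ?m = "length \<beta>"
  have bn: "\<And>i. i < ?L \<Longrightarrow> b!i = (if i < ?m then \<beta>!i else 0)" using pad_nth b by blast
  have mL: "?m \<le> ?L" using b length_pad by simp
  have pos: "\<And>i. i < ?m \<Longrightarrow> 0 < \<beta>!i" using comp unfolding is_composition_def by simp
  have "b!k = b!j + (if k < j then 1 else 0)"
    if j: "j < ?L" and k: "k < ?L" and adj: "Suc (rank b k) = rank b j" for j k
  proof -
    have ljk: "lt b j k" using rank_less_iff[OF k j] adj by simp
    have btw: "\<And>i. i < ?L \<Longrightarrow> \<not> (lt b j i \<and> lt b i k)" using adj_between[OF j k adj] by blast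
    show ?thesis
    proof (cases "b!k = b!j")
      case True
      then show ?thesis using ljk unfolding lt_def by auto
    next
      case False
      then have less: "b!j < b!k" using ljk unfolding lt_def by auto
      then have km: "k < ?m" using bn[OF k] by (cases "k < ?m") auto
      have bk: "b!k = \<beta>!k" using bn[OF k] km by simp
      have step: "b!k = Suc (b!j)"
      proof (rule ccontr)
        assume "b!k \<noteq> Suc (b!j)"
        then have ge: "b!j + 2 \<le> b!k" using less by auto
        obtain s t where st: "s < t" "t < ?m" "\<beta>!t = b!k - 1"
          using inverting_D[OF inv _ km, of "b!k"] ge bk by (metis add_leE less_le_trans one_less_numeral_iff semiring_norm(76) order_refl)
        have "b!t = b!k - 1" using st bn[of t] mL by auto
        then have "lt b j t" "lt b t k" using ge unfolding lt_def by auto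
        then show False using btw[of t] st mL by auto
      qed
      have "k < j"
      proof (cases "j < ?m")
        case False then show ?thesis using km by simp
      next
        case True
        then have "0 < b!j" using bn[OF j] pos by simp
        then have "1 < \<beta>!k" using step bk by simp
        then obtain s t where st: "s < t" "t < ?m" "\<beta>!s = \<beta>!k" "\<beta>!t = \<beta>!k - 1"
          using inverting_D[OF inv _ km, of "\<beta>!k"] by blast
        have bs: "b!s = b!k" "b!t = b!j" using st bn[of s] bn[of t] mL bk step by auto
        have "k \<le> s"
        proof (rule ccontr)
          assume "\<not> k \<le> s"
          then have "lt b s k" "lt b j s" using bs less unfolding lt_def by auto
          then show False using btw[of s] st mL by auto
        qed
        moreover have "t \<le> j"
        proof (rule ccontr)
          assume "\<not> t \<le> j"
          then have "lt b j t" "lt b t k" using bs less unfolding lt_def by auto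
          then show False using btw[of t] st mL by auto
        qed
        ultimately show ?thesis using st by simp
      qed
      then show ?thesis using step by simp
    qed
  qed
  then show ?thesis unfolding S_def by blast
qed

lemma pad_bot:
  assumes comp: "is_composition \<beta>" and inv: "inverting \<beta>" and b: "b = pad lam \<beta>"
    and j: "j < length b" and rj: "rank b j = length b - 1"
  shows "b!j \<le> 1"
proof (rule ccontr)
  let ?L = "length b" let ?m = "length \<beta>"
  have bn: "\<And>i. i < ?L \<Longrightarrow> b!i = (if i < ?m then \<beta>!i else 0)" using pad_nth b by blast
  have mL: "?m \<le> ?L" using b length_pad by simp
  assume "\<not> b!j \<le> 1"
  then have jm: "j < ?m" and bj: "b!j = \<beta>!j" "1 < \<beta>!j" using bn[OF j] by (auto split: if_splits)
  obtain s t where st: "s < t" "t < ?m" "\<beta>!t = \<beta>!j - 1"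
    using inverting_D[OF inv bj(2) jm] by blast
  have t: "t < ?L" "b!t < b!j" using st mL bn[of t] bj by auto
  have "t \<noteq> j" using t by auto
  then have "lt b t j \<or> lt b j t" using lt_total by blast
  moreover have "\<not> lt b j t" using t unfolding lt_def by auto
  moreover have "\<not> lt b t j"
  proof
    assume "lt b t j"
    then have "rank b j < rank b t" using rank_less_iff[OF j t(1)] by simp
    then show False using rj rank_bound[OF t(1)] by simp
  qed
  ultimately show False by blast
qed



definition R :: "(nat \<Rightarrow> nat) \<Rightarrow> nat \<Rightarrow> nat list" where
  "R c k = concat (map (\<lambda>j. replicate (c j) j) (rev [1..<Suc k]))"

lemma R_0[simp]: "R c 0 = []" by (simp add: R_def)
lemma R_Suc: "R c (Suc k) = replicate (c (Suc k)) (Suc k) @ R c k" by (simp add: R_def)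

lemma R_shift: "R c (Suc k) = map Suc (R (\<lambda>j. c (Suc j)) k) @ replicate (c 1) 1"
  by (induction k) (simp_all add: R_Suc)

lemma R_cong: "(\<And>j. 1 \<le> j \<Longrightarrow> j \<le> k \<Longrightarrow> c j = c' j) \<Longrightarrow> R c k = R c' k"
  by (induction k) (simp_all add: R_Suc)

lemma length_R: "(\<And>j. 1 \<le> j \<Longrightarrow> j \<le> k \<Longrightarrow> 1 \<le> c j) \<Longrightarrow> k \<le> length (R c k)"
proof (induction k)
  case (Suc k)
  then have "k \<le> length (R c k)" "1 \<le> c (Suc k)" by auto
  then show ?case by (simp add: R_Suc)
qed simp

lemma set_R: "set (R c k) \<subseteq> {1..k}"
  by (induction k) (auto simp: R_Suc)

lemma fw_alt: "factors_with x k \<longleftrightarrow> (\<exists>\<gamma> c. (\<forall>j\<in>{1..k}. 1 \<le> c j) \<and> (\<forall>v\<in>set \<gamma>. v \<notin> {1..k}) \<and> x = \<gamma> @ R c k)"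
  by (simp add: factors_with_def R_def)

lemma fw_le: "factors_with x k \<Longrightarrow> k \<le> length x"
proof -
  assume "factors_with x k"
  then obtain \<gamma> c where "\<forall>j\<in>{1..k}. 1 \<le> c j" "x = \<gamma> @ R c k" unfolding fw_alt by blast
  then have "k \<le> length (R c k)" using length_R[of k c] by simp
  then show ?thesis using \<open>x = \<gamma> @ R c k\<close> by simp
qed

lemma fw_0: "factors_with x 0"
  unfolding fw_alt by (rule exI[of _ x]) simp

lemma G_props: "factors_with x (GREATEST k. factors_with x k)"
   "factors_with x k \<Longrightarrow> k \<le> (GREATEST k. factors_with x k)"
proof -
  show "factors_with x (GREATEST k. factors_with x k)"
    by (rule GreatestI_nat[of "factors_with x" 0 "length x"]) (rule fw_0, erule fw_le)
  show "factors_with x k \<Longrightarrow> k \<le> (GREATEST k. factors_with x k)"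
    by (rule Greatest_le_nat[of "factors_with x" k "length x"]) (assumption, erule fw_le)
qed

lemma decomp_unique:
  assumes "0 \<notin> set y" "0 \<notin> set y'" "map Suc y @ replicate c 1 = map Suc y' @ replicate c' 1"
  shows "y = y'"
proof -
  have dw: "dropWhile (\<lambda>v. v = 1) (rev (map Suc z @ replicate e 1)) = rev (map Suc z)"
    if "0 \<notin> set z" for z e
  proof -
    have "dropWhile (\<lambda>v. v = 1) (rev (map Suc z @ replicate e 1)) =
          dropWhile (\<lambda>v. v = 1) (replicate e 1 @ rev (map Suc z))" by simp
    also have "\<dots> = dropWhile (\<lambda>v. v = 1) (rev (map Suc z))"
      by (rule dropWhile_append2) simp
    also have "\<dots> = rev (map Suc z)"
      using that by (cases "rev z") (auto simp: dropWhile_eq_self_iff)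
    finally show ?thesis .
  qed
  have "rev (map Suc y) = dropWhile (\<lambda>v. v = 1) (rev (map Suc y @ replicate c 1))"
    using dw[OF assms(1)] by metis
  also have "\<dots> = dropWhile (\<lambda>v. v = 1) (rev (map Suc y' @ replicate c' 1))"
    using assms(3) by (simp only:)
  also have "\<dots> = rev (map Suc y')" using dw[OF assms(2)] by metis
  finally have "rev (map Suc y) = rev (map Suc y')" .
  then show ?thesis by (simp add: inj_map_eq_map)
qed

lemma fw_Suc_form:
  assumes comp: "is_composition x" and fw: "factors_with x (Suc k)"
  shows "\<exists>y c. 1 \<le> c \<and> is_composition y \<and> x = map Suc y @ replicate c 1 \<and> factors_with y k"
proof -
  obtain \<gamma> c where c: "\<forall>j\<in>{1..Suc k}. 1 \<le> c j" and g: "\<forall>v\<in>set \<gamma>. v \<notin> {1..Suc k}"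
    and x: "x = \<gamma> @ R c (Suc k)" using fw unfolding fw_alt by blast
  have gpos: "\<forall>v\<in>set \<gamma>. 0 < v" using comp x unfolding is_composition_def by auto
  have gge: "\<forall>v\<in>set \<gamma>. k + 2 \<le> v" using gpos g by force
  define \<gamma>' where "\<gamma>' = map (\<lambda>v. v - 1) \<gamma>"
  have gg: "\<gamma> = map Suc \<gamma>'" unfolding \<gamma>'_def using gge by (induction \<gamma>) auto
  define y where "y = \<gamma>' @ R (\<lambda>j. c (Suc j)) k"
  have "x = map Suc y @ replicate (c 1) 1" unfolding y_def using x gg R_shift by simp
  moreover have "1 \<le> c 1" using c by simp
  moreover have "is_composition y"
    unfolding y_def is_composition_def \<gamma>'_def using gge set_R by fastforce
  moreover have "factors_with y k" unfolding fw_alt y_def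
    using c gge by (intro exI[of _ \<gamma>'] exI[of _ "\<lambda>j. c (Suc j)"]) (auto simp: \<gamma>'_def)
  ultimately show ?thesis by blast
qed

lemma fw_Suc_iff:
  assumes y: "is_composition y" and c: "1 \<le> c" and x: "x = map Suc y @ replicate c 1"
  shows "factors_with x (Suc k) \<longleftrightarrow> factors_with y k"
proof
  assume "factors_with x (Suc k)"
  moreover have "is_composition x" using x y unfolding is_composition_def by auto
  ultimately obtain y' c' where "is_composition y'" "x = map Suc y' @ replicate c' 1" "factors_with y' k"
    using fw_Suc_form by blast
  moreover have "0 \<notin> set y" "0 \<notin> set y'" using y \<open>is_composition y'\<close> unfolding is_composition_def by auto
  ultimately have "y = y'" using decomp_unique x by simp
  then show "factors_with y k" using \<open>factors_with y' k\<close> by simp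
next
  assume "factors_with y k"
  then obtain \<gamma> cc where cc: "\<forall>j\<in>{1..k}. 1 \<le> cc j" and g: "\<forall>v\<in>set \<gamma>. v \<notin> {1..k}"
    and yy: "y = \<gamma> @ R cc k" unfolding fw_alt by blast
  define c2 where "c2 = (\<lambda>j. if j = 1 then c else cc (j - 1))"
  have "R c2 (Suc k) = map Suc (R (\<lambda>j. c2 (Suc j)) k) @ replicate (c2 1) 1" by (rule R_shift)
  also have "R (\<lambda>j. c2 (Suc j)) k = R cc k" by (rule R_cong) (auto simp: c2_def)
  finally have R2: "R c2 (Suc k) = map Suc (R cc k) @ replicate c 1" by (simp add: c2_def)
  have gpos: "\<forall>v\<in>set \<gamma>. 0 < v" using y yy unfolding is_composition_def by auto
  show "factors_with x (Suc k)" unfolding fw_alt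
  proof (intro exI conjI)
    show "\<forall>j\<in>{1..Suc k}. 1 \<le> c2 j"
    proof
      fix j assume j: "j \<in> {1..Suc k}"
      show "1 \<le> c2 j"
      proof (cases "j = 1")
        case True then show ?thesis using c by (simp add: c2_def)
      next
        case False
        then have "j - 1 \<in> {1..k}" using j by auto
        then show ?thesis using cc False by (simp add: c2_def)
      qed
    qed
    show "\<forall>v\<in>set (map Suc \<gamma>). v \<notin> {1..Suc k}"
    proof
      fix v assume "v \<in> set (map Suc \<gamma>)"
      then obtain u where u: "u \<in> set \<gamma>" "v = Suc u" by auto
      then have "u \<notin> {1..k}" "0 < u" using g gpos by auto
      then show "v \<notin> {1..Suc k}" using u by auto
    qed
    show "x = map Suc \<gamma> @ R c2 (Suc k)" using x yy R2 by simp
  qed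
qed

lemma G_Suc:
  assumes y: "is_composition y" and c: "1 \<le> c" and x: "x = map Suc y @ replicate c 1"
  shows "(GREATEST k. factors_with x k) = Suc (GREATEST k. factors_with y k)"
proof (rule Greatest_equality)
  show "factors_with x (Suc (GREATEST k. factors_with y k))"
    using fw_Suc_iff[OF assms, of "GREATEST k. factors_with y k"] G_props(1)[of y] by simp
  fix k assume k: "factors_with x k"
  show "k \<le> Suc (GREATEST k. factors_with y k)"
  proof (cases k)
    case (Suc k')
    then have "factors_with y k'" using k fw_Suc_iff[OF assms, of k'] by simp
    then show ?thesis using G_props(2)[of y k'] Suc by simp
  qed simp
qed

lemma pure_Suc:
  assumes "is_composition y" "1 \<le> c" "x = map Suc y @ replicate c 1"
  shows "pure x \<longleftrightarrow> \<not> pure y"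
  using G_Suc[OF assms] unfolding pure_def by simp

lemma pure_no_form:
  assumes "is_composition x"
    "\<not> (\<exists>y c. 1 \<le> c \<and> is_composition y \<and> x = map Suc y @ replicate c 1)"
  shows "pure x"
proof -
  have "(GREATEST k. factors_with x k) = 0"
  proof (rule Greatest_equality)
    show "factors_with x 0" by (rule fw_0)
    fix k assume "factors_with x k"
    then show "k \<le> 0"
    proof (cases k)
      case (Suc k')
      then have "factors_with x (Suc k')" using \<open>factors_with x k\<close> by simp
      from fw_Suc_form[OF assms(1) this] have False using assms(2) by blast
      then show ?thesis ..
    qed simp
  qed
  then show ?thesis unfolding pure_def by simp
qed



definition Aset :: "nat list \<Rightarrow> nat \<Rightarrow> nat set" where
  "Aset a r = {s. r \<le> s \<and> Suc s < length a \<and> pos a s < pos a (Suc s)}"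

definition bA :: "nat list \<Rightarrow> nat list" where
  "bA a = map (\<lambda>j. 1 + card (Aset a (rank a j))) [0..<length a]"

lemma length_bA[simp]: "length (bA a) = length a" by (simp add: bA_def)

lemma bA_nth: "j < length a \<Longrightarrow> bA a ! j = 1 + card (Aset a (rank a j))"
  by (simp add: bA_def)

lemma S_bA: "S a (bA a)"
  unfolding S_def
proof (intro conjI allI impI)
  fix j k assume j: "j < length a" and k: "k < length a" and adj: "Suc (rank a k) = rank a j"
  let ?r = "rank a k"
  have pk: "pos a ?r = k" and pj: "pos a (Suc ?r) = j" using pos_rank j k adj by metis+
  have rL: "Suc ?r < length a" using adj rank_bound[OF j] by simp
  have fin: "finite (Aset a (Suc ?r))" unfolding Aset_def by (rule finite_subset[of _ "{..<length a}"]) auto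
  have "Aset a ?r = (if k < j then insert ?r (Aset a (Suc ?r)) else Aset a (Suc ?r))"
    unfolding Aset_def using pk pj rL by (auto simp: le_eq_less_or_eq)
  moreover have "?r \<notin> Aset a (Suc ?r)" unfolding Aset_def by simp
  ultimately have "card (Aset a ?r) = card (Aset a (Suc ?r)) + (if k < j then 1 else 0)"
    using fin by simp
  then show "bA a ! k = bA a ! j + (if k < j then 1 else 0)"
    using bA_nth[OF j] bA_nth[OF k] adj by simp
qed simp

lemma bA_bot: "0 < length a \<Longrightarrow> bA a ! (pos a (length a - 1)) = 1"
proof -
  assume L: "0 < length a"
  have "Aset a (length a - 1) = {}" unfolding Aset_def by auto
  then show ?thesis using pos_props[of "length a - 1" a] bA_nth[of "pos a (length a - 1)" a] L
    by simp
qed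

lemma bA_comp: "is_composition (bA a)"
  unfolding is_composition_def bA_def by auto

lemma S_rank: "S x b \<Longrightarrow> j < length x \<Longrightarrow> rank b j = rank x j"
  using lt_mono_rank(2)[of b x] S_lt[of x b] unfolding S_def by metis

lemma S_unique:
  assumes "S x b1" "S x b2" "0 < length x" "j < length x"
  shows "b1!j + b2!(pos x (length x - 1)) = b2!j + b1!(pos x (length x - 1))"
proof (rule rank_induct[where x=x and k=j and P="\<lambda>j. b1!j + b2!(pos x (length x - 1)) = b2!j + b1!(pos x (length x - 1))"])
  show "0 < length x" "j < length x" using assms by auto
  fix j k assume "j < length x" "k < length x" "Suc (rank x k) = rank x j"
    and IH: "b1!j + b2!(pos x (length x - 1)) = b2!j + b1!(pos x (length x - 1))"
  then show "b1!k + b2!(pos x (length x - 1)) = b2!k + b1!(pos x (length x - 1))"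
    using assms(1,2) unfolding S_def by (auto split: if_splits)
qed simp

lemma S_step_lt:
  assumes "j < length x" "k < length x" "Suc (rank x k) = rank x j"
  shows "lt x j k"
  using rank_less_iff[OF assms(2,1)] assms(3) by simp

lemma bA_le:
  assumes comp: "is_composition a" and k: "k < length a"
  shows "bA a ! k + (a!(pos a (length a - 1)) - 1) \<le> a!k"
proof -
  have L: "0 < length a" using k by linarith
  show ?thesis
  proof (rule rank_induct[where x=a and k=k and P="\<lambda>k. bA a ! k + (a!(pos a (length a - 1)) - 1) \<le> a!k"])
    show "0 < length a" "k < length a" using L k by auto
    show "bA a ! pos a (length a - 1) + (a ! pos a (length a - 1) - 1) \<le> a ! pos a (length a - 1)"
    proof -
      have "pos a (length a - 1) < length a" using pos_props L by simp
      then have "0 < a ! pos a (length a - 1)" using comp unfolding is_composition_def by simp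
      then show ?thesis using bA_bot[OF L] by simp
    qed
    fix j k assume jk: "j < length a" "k < length a" "Suc (rank a k) = rank a j"
      and IH: "bA a ! j + (a ! pos a (length a - 1) - 1) \<le> a ! j"
    have "lt a j k" using S_step_lt jk by blast
    then have "a!j + (if k < j then 1 else 0) \<le> a!k" unfolding lt_def by auto
    moreover have "bA a ! k = bA a ! j + (if k < j then 1 else 0)"
      using S_bA jk unfolding S_def by blast
    ultimately show "bA a ! k + (a ! pos a (length a - 1) - 1) \<le> a ! k" using IH by simp
  qed
qed

lemma inverting_bA:
  assumes L: "0 < length a"
  shows "inverting (bA a)"
  unfolding inverting_def
proof (intro allI impI)
  fix i assume "1 < i \<and> (\<exists>j<length (bA a). i \<le> bA a ! j)"
  then obtain j0 where i: "1 < i" and j0: "j0 < length a" "i \<le> bA a ! j0" by auto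
  let ?Rs = "{r. r < length a \<and> i \<le> bA a ! pos a r}"
  have "rank a j0 \<in> ?Rs" using j0 rank_bound pos_rank by simp
  moreover have fin: "finite ?Rs" by simp
  ultimately have r0: "Max ?Rs \<in> ?Rs" by (intro Max_in) auto
  define r where "r = Max ?Rs"
  have rR: "r < length a" "i \<le> bA a ! pos a r" using r0 r_def by auto
  have "r \<noteq> length a - 1" using rR bA_bot[OF L] i by auto
  then have rS: "Suc r < length a" using rR by simp
  have "Suc r \<notin> ?Rs"
  proof
    assume "Suc r \<in> ?Rs"
    then have "Suc r \<le> r" using Max_ge[OF fin, of "Suc r"] r_def by simp
    then show False by simp
  qed
  then have jv: "bA a ! pos a (Suc r) < i" using rS by simp
  define k where "k = pos a r" define j where "j = pos a (Suc r)"
  have jk: "j < length a" "k < length a" "Suc (rank a k) = rank a j"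
    using pos_props rR rS j_def k_def by auto
  then have eq: "bA a ! k = bA a ! j + (if k < j then 1 else 0)" using S_bA unfolding S_def by blast
  have "bA a ! j < bA a ! k" using jv rR(2) k_def j_def by simp
  then have "k < j" "bA a ! k = i" "bA a ! j = i - 1" using eq jv rR(2) k_def j_def by (auto split: if_splits)
  then show "\<exists>s t. s < t \<and> t < length (bA a) \<and> bA a ! s = i \<and> bA a ! t = i - 1"
    using jk by auto
qed



lemma part_comp: "is_partition lam \<Longrightarrow> is_composition lam"
  by (simp add: is_partition_def)

lemma part_sorted: "is_partition lam \<Longrightarrow> sorted_wrt (\<ge>) lam"
  by (simp add: is_partition_def)

lemma comp_nth: "is_composition x \<Longrightarrow> j < length x \<Longrightarrow> 0 < x!j"
  by (simp add: is_composition_def)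

lemma comp_iff_nth: "is_composition x \<longleftrightarrow> (\<forall>j<length x. 0 < x!j)"
  by (auto simp: is_composition_def in_set_conv_nth)

lemma phi_comp:
  assumes "is_partition lam" "is_composition \<beta>"
  shows "is_composition (phi lam \<beta>)"
  unfolding comp_iff_nth
proof (intro allI impI)
  fix j assume j: "j < length (phi lam \<beta>)"
  then have j': "j < length (pad lam \<beta>)" by (simp add: length_phi)
  show "0 < phi lam \<beta> ! j"
  proof (cases "j < length \<beta>")
    case True
    then show ?thesis using phi_nth[OF j'] pad_nth[OF j'] comp_nth[OF assms(2)] by simp
  next
    case False
    then have L: "length (pad lam \<beta>) = length lam" using j' length_pad by auto
    have "rank (pad lam \<beta>) j < length lam" using rank_bound[OF j'] L by simp
    then have "0 < gl lam (rank (pad lam \<beta>) j)"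
      using comp_nth[OF part_comp[OF assms(1)]] by (simp add: gl_def)
    then show ?thesis using phi_nth[OF j'] by simp
  qed
qed

lemma image_C:
  assumes "(lam, \<beta>) \<in> PB_set n d"
  shows "phi lam \<beta> \<in> C_set n d"
  using assms phi_comp phi_sum[of lam \<beta>] length_phi[of lam \<beta>] length_pad[of lam \<beta>]
  unfolding PB_set_def C_set_def B_set_def by auto

lemma preimage_S:
  assumes "is_partition lam" "is_composition \<beta>" "inverting \<beta>"
  shows "S (phi lam \<beta>) (pad lam \<beta>)"
proof -
  let ?b = "pad lam \<beta>" let ?a = "phi lam \<beta>"
  have Sb: "S ?b ?b" using pad_S assms(2,3) by blast
  have r: "\<And>j. j < length ?b \<Longrightarrow> rank ?a j = rank ?b j"
    using phi_rank[OF part_sorted[OF assms(1)]] by blast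
  show ?thesis using Sb r unfolding S_def length_phi by auto
qed

lemma preimage_bot:
  assumes "is_partition lam" "is_composition \<beta>" "inverting \<beta>" "0 < length (phi lam \<beta>)"
  shows "pad lam \<beta> ! pos (phi lam \<beta>) (length (phi lam \<beta>) - 1) \<le> 1"
proof -
  let ?b = "pad lam \<beta>" let ?a = "phi lam \<beta>"
  let ?j = "pos ?a (length ?a - 1)"
  have j: "?j < length ?a" "rank ?a ?j = length ?a - 1" using pos_props assms(4) by auto
  then have "rank ?b ?j = length ?b - 1"
    using phi_rank[OF part_sorted[OF assms(1)], of ?j \<beta>] by (simp add: length_phi)
  then show ?thesis using pad_bot[OF assms(2,3) refl] j by (simp add: length_phi)
qed

lemma filter_pad: "is_composition \<beta> \<Longrightarrow> filter (\<lambda>v. 0 < v) (pad lam \<beta>) = \<beta>"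
  unfolding pad_def is_composition_def by (simp add: filter_id_conv)

lemma lam_determined:
  assumes "is_partition lam"
  shows "length lam = card {j. j < length (phi lam \<beta>) \<and> pad lam \<beta> ! j < phi lam \<beta> ! j}"
    and "\<And>r. r < length lam \<Longrightarrow> lam ! r = phi lam \<beta> ! pos (phi lam \<beta>) r - pad lam \<beta> ! pos (phi lam \<beta>) r"
proof -
  let ?b = "pad lam \<beta>" let ?a = "phi lam \<beta>" let ?L = "length ?a"
  have L: "length ?b = ?L" by (simp add: length_phi)
  have lamL: "length lam \<le> ?L" using L length_pad by simp
  have r: "\<And>j. j < ?L \<Longrightarrow> rank ?a j = rank ?b j"
    using phi_rank[OF part_sorted[OF assms(1)]] L by auto
  have an: "\<And>j. j < ?L \<Longrightarrow> ?a!j = ?b!j + gl lam (rank ?a j)"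
    using phi_nth L r by simp
  have lpos: "\<And>r. r < length lam \<Longrightarrow> 0 < lam!r" using comp_nth[OF part_comp[OF assms(1)]] .
  have iff: "\<And>j. j < ?L \<Longrightarrow> ?b!j < ?a!j \<longleftrightarrow> rank ?a j < length lam"
    using an lpos by (auto simp: gl_def)
  let ?A = "{j. j < ?L \<and> ?b!j < ?a!j}"
  have "rank ?a ` ?A = {..<length lam}"
  proof
    show "rank ?a ` ?A \<subseteq> {..<length lam}" using iff by auto
    show "{..<length lam} \<subseteq> rank ?a ` ?A"
    proof
      fix r assume "r \<in> {..<length lam}"
      then have rr: "r < length lam" "r < ?L" using lamL by auto
      then have "pos ?a r \<in> ?A" using pos_props[OF rr(2)] iff by auto
      then show "r \<in> rank ?a ` ?A" using pos_props[OF rr(2)] by force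
    qed
  qed
  moreover have "inj_on (rank ?a) ?A" using rank_inj[of ?a] by (rule inj_on_subset) auto
  ultimately show "length lam = card ?A" using card_image by fastforce
  fix r assume rr: "r < length lam"
  then have "r < ?L" using lamL by simp
  then show "lam ! r = ?a ! pos ?a r - ?b ! pos ?a r"
    using an[of "pos ?a r"] pos_props[of r ?a] rr by (simp add: gl_def)
qed

lemma same_b:
  assumes "is_partition lam1" "is_composition \<beta>1" "is_partition lam2" "is_composition \<beta>2"
    "phi lam1 \<beta>1 = phi lam2 \<beta>2" "pad lam1 \<beta>1 = pad lam2 \<beta>2"
  shows "lam1 = lam2 \<and> \<beta>1 = \<beta>2"
proof
  show "\<beta>1 = \<beta>2" using filter_pad assms by metis
  have len: "length lam1 = length lam2" using lam_determined(1)[OF assms(1), of \<beta>1]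
      lam_determined(1)[OF assms(3), of \<beta>2] assms(5,6) by simp
  show "lam1 = lam2"
  proof (rule nth_equalityI)
    show "length lam1 = length lam2" by (rule len)
    fix r assume "r < length lam1"
    then show "lam1 ! r = lam2 ! r"
      using lam_determined(2)[OF assms(1), of r \<beta>1] lam_determined(2)[OF assms(3), of r \<beta>2] len assms(5,6)
      by simp
  qed
qed

lemma mixed_False:
  assumes c1: "is_composition \<beta>1" and c2: "is_composition \<beta>2" and p1: "pure \<beta>1" and p2: "pure \<beta>2"
    and L1: "length (pad lam1 \<beta>1) = L" and L2: "length (pad lam2 \<beta>2) = L"
    and eq: "\<And>j. j < L \<Longrightarrow> pad lam1 \<beta>1 ! j = pad lam2 \<beta>2 ! j + 1"
    and z: "j0 < L" "pad lam2 \<beta>2 ! j0 = 0"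
  shows False
proof -
  let ?b1 = "pad lam1 \<beta>1" let ?b2 = "pad lam2 \<beta>2"
  let ?m = "length \<beta>2"
  have "\<not> j0 < ?m"
  proof
    assume "j0 < ?m"
    then have "0 < \<beta>2 ! j0" using comp_nth[OF c2] by simp
    then show False using z pad_nth[of j0 lam2 \<beta>2] L2 \<open>j0 < ?m\<close> by simp
  qed
  then have mL: "?m < L" using z by simp
  have lb1: "length \<beta>1 \<le> L" using L1 length_pad by simp
  have "L - 1 < length \<beta>1"
  proof (rule ccontr)
    assume "\<not> L - 1 < length \<beta>1"
    then have "?b1 ! (L - 1) = 0" using pad_nth[of "L - 1" lam1 \<beta>1] L1 mL by simp
    then show False using eq[of "L - 1"] mL by simp
  qed
  then have lb1': "length \<beta>1 = L" using lb1 mL by simp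
  have b1: "?b1 = \<beta>1" using lb1' L1 length_pad[of lam1 \<beta>1] by (simp add: pad_def)
  have "\<beta>1 = map Suc \<beta>2 @ replicate (L - ?m) 1"
  proof (rule nth_equalityI)
    show "length \<beta>1 = length (map Suc \<beta>2 @ replicate (L - ?m) 1)" using lb1' mL by simp
    fix j assume "j < length \<beta>1"
    then have j: "j < L" using lb1' by simp
    have "\<beta>1 ! j = ?b2 ! j + 1" using eq[OF j] b1 by simp
    also have "\<dots> = (if j < ?m then \<beta>2 ! j else 0) + 1" using pad_nth[of j lam2 \<beta>2] L2 j by simp
    finally show "\<beta>1 ! j = (map Suc \<beta>2 @ replicate (L - ?m) 1) ! j"
      using j by (auto simp: nth_append)
  qed
  then have "pure \<beta>1 \<longleftrightarrow> \<not> pure \<beta>2" using pure_Suc[OF c2, of "L - ?m"] mL by simp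
  then show False using p1 p2 by simp
qed



lemma inj_PB: "inj_on (\<lambda>(lam, \<beta>). phi lam \<beta>) (PB_set n d)"
proof (rule inj_onI)
  fix p q assume pP: "p \<in> PB_set n d" and qP: "q \<in> PB_set n d"
    and eq0: "(\<lambda>(lam, \<beta>). phi lam \<beta>) p = (\<lambda>(lam, \<beta>). phi lam \<beta>) q"
  obtain lam1 \<beta>1 where p: "p = (lam1, \<beta>1)" by (cases p)
  obtain lam2 \<beta>2 where q: "q = (lam2, \<beta>2)" by (cases q)
  have h1: "is_partition lam1" "is_composition \<beta>1" "inverting \<beta>1" "pure \<beta>1"
    using pP p unfolding PB_set_def B_set_def by auto
  have h2: "is_partition lam2" "is_composition \<beta>2" "inverting \<beta>2" "pure \<beta>2"
    using qP q unfolding PB_set_def B_set_def by auto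
  have eq: "phi lam1 \<beta>1 = phi lam2 \<beta>2" using eq0 p q by simp
  let ?a = "phi lam1 \<beta>1" let ?L = "length ?a"
  let ?b1 = "pad lam1 \<beta>1" let ?b2 = "pad lam2 \<beta>2"
  have l1: "length ?b1 = ?L" by (simp add: length_phi)
  have l2: "length ?b2 = ?L" using eq by (simp add: length_phi)
  show "p = q"
  proof (cases "?L = 0")
    case True
    then show ?thesis using l1 l2 p q length_pad[of lam1 \<beta>1] length_pad[of lam2 \<beta>2] by simp
  next
    case False
    then have L: "0 < ?L" by simp
    let ?bot = "pos ?a (?L - 1)"
    have bot: "?bot < ?L" using pos_props L by simp
    have S1: "S ?a ?b1" using preimage_S h1 by blast
    have S2: "S ?a ?b2" using preimage_S[OF h2(1-3)] eq by simp
    have bt1: "?b1 ! ?bot \<le> 1" using preimage_bot[OF h1(1-3)] L by simp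
    have bt2: "?b2 ! ?bot \<le> 1" using preimage_bot[OF h2(1-3)] L eq by simp
    have U: "\<And>j. j < ?L \<Longrightarrow> ?b1 ! j + ?b2 ! ?bot = ?b2 ! j + ?b1 ! ?bot"
      using S_unique[OF S1 S2 L] by blast
    consider "?b1 ! ?bot = ?b2 ! ?bot" | "?b1 ! ?bot = 1" "?b2 ! ?bot = 0" | "?b1 ! ?bot = 0" "?b2 ! ?bot = 1"
      using bt1 bt2 by linarith
    then show ?thesis
    proof cases
      case 1
      have "?b1 = ?b2"
      proof (rule nth_equalityI)
        show "length ?b1 = length ?b2" using l1 l2 by simp
        fix j assume "j < length ?b1"
        then show "?b1 ! j = ?b2 ! j" using U[of j] 1 l1 by simp
      qed
      then show ?thesis using same_b[OF h1(1,2) h2(1,2) eq] p q by simp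
    next
      case 2
      have "False"
        by (rule mixed_False[OF h1(2) h2(2) h1(4) h2(4) l1 l2 _ bot 2(2)]) (use U 2 in simp)
      then show ?thesis ..
    next
      case 3
      have "False"
        by (rule mixed_False[OF h2(2) h1(2) h2(4) h1(4) l2 l1 _ bot 3(1)]) (use U 3 in simp)
      then show ?thesis ..
    qed
  qed
qed

lemma inverting_tail:
  assumes inv: "inverting (map Suc y @ replicate c 1)"
  shows "inverting y"
  unfolding inverting_def
proof (intro allI impI)
  let ?x = "map Suc y @ replicate c 1"
  have xn: "\<And>j. j < length ?x \<Longrightarrow> ?x ! j = (if j < length y then Suc (y!j) else 1)"
    by (auto simp: nth_append)
  fix i assume "1 < i \<and> (\<exists>j<length y. i \<le> y ! j)"
  then obtain j where i: "1 < i" and j: "j < length y" "i \<le> y!j" by auto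
  have "Suc i \<le> ?x ! j" using xn[of j] j by simp
  then obtain s t where st: "s < t" "t < length ?x" "?x ! s = Suc i" "?x ! t = Suc i - 1"
    using inverting_D[OF inv, of "Suc i" j] i j by auto
  have t: "t < length y" using xn[OF st(2)] st(4) i by (auto split: if_splits)
  then have "s < length y" using st by simp
  then show "\<exists>s t. s < t \<and> t < length y \<and> y ! s = i \<and> y ! t = i - 1"
    using st t xn[of s] xn[of t] by (intro exI[of _ s] exI[of _ t]) auto
qed



lemma surj_PB:
  assumes aC: "\<alpha> \<in> C_set n d"
  shows "\<exists>lam \<beta>. (lam, \<beta>) \<in> PB_set n d \<and> phi lam \<beta> = \<alpha>"
proof -
  have comp: "is_composition \<alpha>" and sum: "sum_list \<alpha> = d" and len: "length \<alpha> \<le> n"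
    using aC unfolding C_set_def by auto
  let ?L = "length \<alpha>"
  show ?thesis
  proof (cases "?L = 0")
    case True
    then have a0: "\<alpha> = []" by simp
    have "pure []"
      by (rule pure_no_form) (auto simp: is_composition_def)
    moreover have "inverting []" by (simp add: inverting_def)
    moreover have "phi [] [] = []" by (simp add: phi_def pad_def)
    ultimately show ?thesis using a0 sum
      by (intro exI[of _ "[]"]) (auto simp: PB_set_def B_set_def is_partition_def is_composition_def)
  next
    case False
    then have L: "0 < ?L" by simp
    let ?bA = "bA \<alpha>"
    define f where "f r = (if r < ?L then \<alpha>!(pos \<alpha> r) - ?bA!(pos \<alpha> r) else 0)" for r
    have le: "\<And>j. j < ?L \<Longrightarrow> ?bA!j \<le> \<alpha>!j" using bA_le[OF comp] by fastforce
    have fj: "\<And>j. j < ?L \<Longrightarrow> f (rank \<alpha> j) = \<alpha>!j - ?bA!j"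
      using rank_bound pos_rank f_def by simp
    have anti: "f (Suc r) \<le> f r" for r
    proof (cases "Suc r < ?L")
      case True
      define j where "j = pos \<alpha> (Suc r)" define k where "k = pos \<alpha> r"
      have jk: "j < ?L" "k < ?L" "Suc (rank \<alpha> k) = rank \<alpha> j"
        using pos_props True j_def k_def by auto
      have "lt \<alpha> j k" using S_step_lt jk by blast
      then have "\<alpha>!j + (if k < j then 1 else 0) \<le> \<alpha>!k" unfolding lt_def by auto
      moreover have "?bA ! k = ?bA ! j + (if k < j then 1 else 0)"
        using S_bA jk unfolding S_def by blast
      moreover have "?bA!j \<le> \<alpha>!j" using le jk by simp
      ultimately have "\<alpha>!j - ?bA!j \<le> \<alpha>!k - ?bA!k" by simp
      then show ?thesis using True j_def k_def f_def by simp
    next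
      case False then show ?thesis by (simp add: f_def)
    qed
    have anti2: "\<And>r s. r \<le> s \<Longrightarrow> f s \<le> f r"
      using lift_Suc_antimono_le[of f] anti by blast
    have rkA: "\<And>j. j < ?L \<Longrightarrow> rank ?bA j = rank \<alpha> j" using S_rank[OF S_bA] by blast
    show ?thesis
    proof (cases "\<exists>y c. 1 \<le> c \<and> is_composition y \<and> ?bA = map Suc y @ replicate c 1 \<and> \<not> pure ?bA")
      case False
      have pure: "pure ?bA"
      proof (cases "\<exists>y c. 1 \<le> c \<and> is_composition y \<and> ?bA = map Suc y @ replicate c 1")
        case True then show ?thesis using False by blast
      next
        case nf: False show ?thesis by (rule pure_no_form[OF bA_comp nf])
      qed
      define lam where "lam = takeWhile (\<lambda>v. 0 < v) (map f [0..<?L])"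
      have ll: "length lam \<le> ?L" unfolding lam_def using length_takeWhile_le[of _ "map f [0..<?L]"] by simp
      have lnth: "\<And>r. r < length lam \<Longrightarrow> lam!r = f r"
        unfolding lam_def using ll lam_def by (simp add: takeWhile_nth)
      have lz: "\<And>r. r < ?L \<Longrightarrow> length lam \<le> r \<Longrightarrow> f r = 0"
      proof -
        fix r assume r: "r < ?L" "length lam \<le> r"
        then have "length lam < length (map f [0..<?L])" by simp
        then have "\<not> 0 < map f [0..<?L] ! length lam" using nth_length_takeWhile lam_def by metis
        then have "f (length lam) = 0" using r by simp
        then show "f r = 0" using anti2[OF r(2)] by simp
      qed
      have glf: "\<And>r. r < ?L \<Longrightarrow> gl lam r = f r" using lnth lz by (auto simp: gl_def)
      have part: "is_partition lam"
        unfolding is_partition_def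
      proof
        show "is_composition lam" unfolding is_composition_def lam_def
          by (auto dest: set_takeWhileD)
        show "sorted_wrt (\<ge>) lam" unfolding sorted_wrt_iff_nth_less
          using lnth anti2 by auto
      qed
      have padeq: "pad lam ?bA = ?bA" using ll by (simp add: pad_def)
      have phieq: "phi lam ?bA = \<alpha>"
      proof (rule nth_equalityI)
        show "length (phi lam ?bA) = length \<alpha>" using padeq by (simp add: length_phi)
        fix j assume "j < length (phi lam ?bA)"
        then have j: "j < ?L" using padeq by (simp add: length_phi)
        have "phi lam ?bA ! j = ?bA ! j + gl lam (rank ?bA j)"
          using phi_nth[of j lam ?bA] padeq j by simp
        also have "\<dots> = \<alpha> ! j" using rkA[OF j] glf[OF rank_bound[OF j]] fj[OF j] le[OF j] by simp
        finally show "phi lam ?bA ! j = \<alpha> ! j" .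
      qed
      have "(lam, ?bA) \<in> PB_set n d"
        unfolding PB_set_def B_set_def
        using part bA_comp pure inverting_bA[OF L] len ll phi_sum[of lam ?bA] phieq sum by auto
      then show ?thesis using phieq by blast
    next
      case True
      then obtain y c where c: "1 \<le> c" and yc: "is_composition y"
        and bAe: "?bA = map Suc y @ replicate c 1" and np: "\<not> pure ?bA" by blast
      define b where "b = y @ replicate c 0"
      have Ly: "?L = length y + c" using bAe length_bA[of \<alpha>] by simp
      have bn: "\<And>j. j < ?L \<Longrightarrow> ?bA!j = b!j + 1"
        unfolding bAe b_def using Ly by (auto simp: nth_append)
      have Sb: "S \<alpha> b"
        unfolding S_def
      proof (intro conjI allI impI)
        show "length b = ?L" using Ly b_def by simp
        fix j k assume jk: "j < ?L" "k < ?L" "Suc (rank \<alpha> k) = rank \<alpha> j"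
        then have "?bA ! k = ?bA ! j + (if k < j then 1 else 0)"
          using S_bA unfolding S_def by blast
        then show "b ! k = b ! j + (if k < j then 1 else 0)" using bn jk by simp
      qed
      have rkb: "\<And>j. j < ?L \<Longrightarrow> rank b j = rank \<alpha> j" using S_rank[OF Sb] by blast
      define lam where "lam = map (\<lambda>r. f r + 1) [0..<?L]"
      have padeq: "pad lam y = b" unfolding pad_def lam_def b_def using Ly by simp
      have phieq: "phi lam y = \<alpha>"
      proof (rule nth_equalityI)
        show "length (phi lam y) = length \<alpha>"
          using padeq Sb unfolding S_def by (simp add: length_phi)
        fix j assume "j < length (phi lam y)"
        then have j: "j < ?L" using padeq Sb unfolding S_def by (simp add: length_phi)
        have "phi lam y ! j = b ! j + gl lam (rank b j)"
          using phi_nth[of j lam y] padeq j Sb unfolding S_def by simp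
        also have "\<dots> = \<alpha> ! j" using rkb[OF j] rank_bound[OF j] fj[OF j] le[OF j] bn[OF j]
          by (simp add: gl_def lam_def)
        finally show "phi lam y ! j = \<alpha> ! j" .
      qed
      have part: "is_partition lam"
        unfolding is_partition_def
      proof
        show "is_composition lam" unfolding is_composition_def lam_def by auto
        show "sorted_wrt (\<ge>) lam" unfolding sorted_wrt_iff_nth_less lam_def
          using anti2 by auto
      qed
      have py: "pure y" using pure_Suc[OF yc c bAe] np by simp
      have iy: "inverting y" using inverting_tail inverting_bA[OF L] bAe by metis
      have "(lam, y) \<in> PB_set n d"
        unfolding PB_set_def B_set_def
        using part yc py iy len Ly phi_sum[of lam y] phieq sum by (auto simp: lam_def)
      then show ?thesis using phieq by blast
    qed
  qed
qed

theorem proposition3p2: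
  fixes n d :: nat
  assumes "1 \<le> n"
  shows "bij_betw (\<lambda>(lam, \<beta>). phi lam \<beta>) (PB_set n d) (C_set n d)"
  unfolding bij_betw_def
proof
  show "inj_on (\<lambda>(lam, \<beta>). phi lam \<beta>) (PB_set n d)" by (rule inj_PB)
  show "(\<lambda>(lam, \<beta>). phi lam \<beta>) ` PB_set n d = C_set n d"
  proof
    show "(\<lambda>(lam, \<beta>). phi lam \<beta>) ` PB_set n d \<subseteq> C_set n d" using image_C by auto
    show "C_set n d \<subseteq> (\<lambda>(lam, \<beta>). phi lam \<beta>) ` PB_set n d"
    proof
      fix \<alpha> assume "\<alpha> \<in> C_set n d"
      then obtain lam \<beta> where "(lam, \<beta>) \<in> PB_set n d" "phi lam \<beta> = \<alpha>" using surj_PB by blast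
      then show "\<alpha> \<in> (\<lambda>(lam, \<beta>). phi lam \<beta>) ` PB_set n d" by force
    qed
  qed
qed

end
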